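(* Let $p$ be an odd prime, $R=F_p+vF_p$ with $v^2=v$, $\theta=\lambda+v\mu$ ($\lambda,\mu\in F_p$) a unit of $R$, and let $C$ be a $\theta$-constacyclic code of length $n$ over $R$ with generating set in standard form $\{vg_{1-v}(x),(1-v)g_v(x)\}$. Then $\phi_\theta(C)\subseteq\langle g_{1-v}(x)g_v(x)\rangle$ in $F_p[x]/\langle x^{2n}-1\rangle$.
   Context: A $\theta$-constacyclic code of length $n$ over $R$ is an $R$-submodule of $R^n$ closed under $(c_0,\dots,c_{n-1})\mapsto(\theta c_{n-1},c_0,\dots,c_{n-2})$, identified with an ideal of $R_n=R[x]/\langle x^n-\theta\rangle$ via $(c_i)\mapsto\sum c_ix^i$. A set $\{vg_1(x),(1-v)g_2(x)\}$ is a generating set in standard form for $C$ if it generates $C$ as an ideal, each $g_i\in F_p[x]$ is monic or $0$, $g_1\mid x^n-(\lambda+\mu)$ if $g_1\ne0$, and $g_2\mid x^n-\lambda$ if $g_2\neq0$. The polynomial Gray map $\phi_\theta:R_n\to F_p[x]/\langle x^{2n}-1\rangle$ is defined by writing $f(x)\in R_n$ (degree $<n$) as $f(x)=r(x)+vq(x)$ with $r,q\in F_p[x]$ of degree $<n$ and setting $\phi_\theta(f)=\lambda(\lambda+\mu)q(x)+x^n[-\mu r(x)-(\lambda+\mu)q(x)]$. *)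

theory Defs
  imports "HOL-Computational_Algebra.Polynomial" "HOL-Computational_Algebra.Primes" "HOL-Library.Cardinality"
begin

text \<open>The ring R = F + vF with v^2 = v.  The element VR a b stands for a + v b.\<close>
datatype 'a vr = VR (re: 'a) (vp: 'a)

instantiation vr :: (comm_ring_1) comm_ring_1
begin
definition "0 = VR 0 0"
definition "1 = VR 1 0"
definition "x + y = VR (re x + re y) (vp x + vp y)"
definition "x - y = VR (re x - re y) (vp x - vp y)"
definition "- x = VR (- re x) (- vp x)"
definition "x * y = VR (re x * re y) (re x * vp y + vp x * re y + vp x * vp y)"
instance
  by standard (auto simp: zero_vr_def one_vr_def plus_vr_def minus_vr_def uminus_vr_def
      times_vr_def algebra_simps intro: vr.expand)
end

definition vR :: "'a::comm_ring_1 vr" where "vR = VR 0 1"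

definition emb :: "'a::comm_ring_1 poly \<Rightarrow> 'a vr poly" where
  "emb g = map_poly (\<lambda>a. VR a 0) g"

text \<open>Elements of R_n = R[x]/<x^n - theta>, represented by polynomials of degree < n.\<close>
definition Rn :: "nat \<Rightarrow> 'a::comm_ring_1 vr poly set" where
  "Rn n = {f. f = 0 \<or> degree f < n}"

text \<open>Reduction modulo x^n - theta (x^(i+kn) = theta^k x^i).\<close>
definition reduce :: "nat \<Rightarrow> 'a::comm_ring_1 vr \<Rightarrow> 'a vr poly \<Rightarrow> 'a vr poly" where
  "reduce n \<theta> f = (\<Sum>i<n. monom (\<Sum>k\<le>degree f. \<theta> ^ k * coeff f (i + k * n)) i)"

text \<open>Theta-constacyclic code of length n over R, in polynomial coordinates:
  an R-submodule of R^n closed under the constacyclic shift (multiplication by x in R_n).\<close>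
definition constacyclic_code :: "nat \<Rightarrow> 'a::comm_ring_1 vr \<Rightarrow> 'a vr poly set \<Rightarrow> bool" where
  "constacyclic_code n \<theta> C \<longleftrightarrow> C \<subseteq> Rn n \<and> 0 \<in> C \<and>
     (\<forall>f\<in>C. \<forall>g\<in>C. f + g \<in> C) \<and> (\<forall>a. \<forall>f\<in>C. smult a f \<in> C) \<and>
     (\<forall>f\<in>C. reduce n \<theta> (monom 1 1 * f) \<in> C)"

definition Rn_ideal :: "nat \<Rightarrow> 'a::comm_ring_1 vr \<Rightarrow> 'a vr poly set \<Rightarrow> bool" where
  "Rn_ideal n \<theta> I \<longleftrightarrow> I \<subseteq> Rn n \<and> 0 \<in> I \<and>
     (\<forall>f\<in>I. \<forall>g\<in>I. f + g \<in> I) \<and> (\<forall>a\<in>Rn n. \<forall>f\<in>I. reduce n \<theta> (a * f) \<in> I)"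

definition Rn_ideal_gen :: "nat \<Rightarrow> 'a::comm_ring_1 vr \<Rightarrow> 'a vr poly set \<Rightarrow> 'a vr poly set" where
  "Rn_ideal_gen n \<theta> S = \<Inter> {I. Rn_ideal n \<theta> I \<and> S \<subseteq> I}"

definition gray :: "nat \<Rightarrow> 'a::comm_ring_1 \<Rightarrow> 'a \<Rightarrow> 'a vr poly \<Rightarrow> 'a poly" where
  "gray n lam mu f = (let r = map_poly re f; q = map_poly vp f in
     smult (lam * (lam + mu)) q + monom 1 n * (smult (- mu) r - smult (lam + mu) q))"

end

theory Submission
  imports Defs
begin

lemma map_poly_add_hom:
  fixes h :: "'a::comm_ring_1 \<Rightarrow> 'b::comm_ring_1"
  assumes "\<And>x y. h (x + y) = h x + h y" "h 0 = 0"
  shows "map_poly h (p + q) = map_poly h p + map_poly h q"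
  by (rule poly_eqI) (simp add: coeff_map_poly assms)

lemma hom_sum_gen:
  assumes "\<And>x y. h (x + y) = h x + h y" "h 0 = 0"
  shows "h (\<Sum>i\<in>A. f i) = (\<Sum>i\<in>A. h (f i))"
proof (induction A rule: infinite_finite_induct)
qed (auto simp: assms)

lemma map_poly_mult_hom:
  fixes h :: "'a::comm_ring_1 \<Rightarrow> 'b::comm_ring_1"
  assumes "\<And>x y. h (x + y) = h x + h y" "h 0 = 0" "\<And>x y. h (x * y) = h x * h y"
  shows "map_poly h (p * q) = map_poly h p * map_poly h q"
proof (rule poly_eqI)
  fix n
  show "coeff (map_poly h (p * q)) n = coeff (map_poly h p * map_poly h q) n"
    by (simp add: coeff_map_poly assms coeff_mult hom_sum_gen[of h, OF assms(1,2)])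
qed

lemma map_poly_minus_hom:
  fixes h :: "'a::comm_ring_1 \<Rightarrow> 'b::comm_ring_1"
  assumes "\<And>x y. h (x + y) = h x + h y" "h 0 = 0"
  shows "map_poly h (p - q) = map_poly h p - map_poly h q"
proof -
  have "map_poly h p = map_poly h ((p - q) + q)" by simp
  also have "\<dots> = map_poly h (p - q) + map_poly h q" by (rule map_poly_add_hom[OF assms])
  finally show ?thesis by simp
qed

definition RN :: "nat \<Rightarrow> 'a::comm_ring_1 \<Rightarrow> nat \<Rightarrow> 'a poly \<Rightarrow> 'a poly" where
  "RN n \<theta> N f = (\<Sum>i<n. monom (\<Sum>k\<le>N. \<theta> ^ k * coeff f (i + k * n)) i)"

lemma reduce_RN:
  assumes "n > 0" "degree f \<le> N"
  shows "reduce n \<theta> f = RN n \<theta> N f"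
  unfolding reduce_def RN_def
proof (rule sum.cong[OF refl])
  fix i assume "i \<in> {..<n}"
  have "(\<Sum>k\<le>N. \<theta> ^ k * coeff f (i + k * n)) = (\<Sum>k\<le>degree f. \<theta> ^ k * coeff f (i + k * n))"
  proof (rule sum.mono_neutral_right)
    show "\<forall>k\<in>{..N} - {..degree f}. \<theta> ^ k * coeff f (i + k * n) = 0"
    proof
      fix k assume "k \<in> {..N} - {..degree f}"
      hence "k > degree f" by auto
      moreover have "k \<le> i + k * n" using assms(1) by (cases n) auto
      ultimately show "\<theta> ^ k * coeff f (i + k * n) = 0" by (simp add: coeff_eq_0)
    qed
  qed (use assms in auto)
  thus "monom (\<Sum>k\<le>degree f. \<theta> ^ k * coeff f (i + k * n)) i =
        monom (\<Sum>k\<le>N. \<theta> ^ k * coeff f (i + k * n)) i" by simp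
qed

lemma RN_add: "RN n \<theta> N (f + g) = RN n \<theta> N f + RN n \<theta> N g"
  unfolding RN_def by (simp add: distrib_left sum.distrib add_monom[symmetric])

lemma RN_0: "RN n \<theta> N 0 = 0"
  unfolding RN_def by simp

lemma RN_sum: "RN n \<theta> N (\<Sum>j\<in>A. f j) = (\<Sum>j\<in>A. RN n \<theta> N (f j))"
  by (rule hom_sum_gen) (auto simp: RN_add RN_0)

lemma RN_monom:
  assumes "n > 0" "j \<le> N"
  shows "RN n \<theta> N (monom c j) = monom (\<theta> ^ (j div n) * c) (j mod n)"
proof -
  have inner: "(\<Sum>k\<le>N. \<theta> ^ k * coeff (monom c j) (i + k * n)) =
      (if i = j mod n then \<theta> ^ (j div n) * c else 0)" if "i < n" for i
  proof -
    have eq: "(j = i + k * n) = (k = j div n \<and> i = j mod n)" for k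
    proof
      assume "j = i + k * n" thus "k = j div n \<and> i = j mod n" using that by simp
    next
      assume "k = j div n \<and> i = j mod n" thus "j = i + k * n"
        by (metis div_mult_mod_eq add.commute)
    qed
    have "(\<Sum>k\<le>N. \<theta> ^ k * coeff (monom c j) (i + k * n)) =
          (\<Sum>k\<le>N. if k = j div n then (if i = j mod n then \<theta> ^ k * c else 0) else 0)"
      by (rule sum.cong) (auto simp: coeff_monom eq)
    also have "\<dots> = (if i = j mod n then \<theta> ^ (j div n) * c else 0)"
      using assms(2) div_le_dividend[of j n] le_trans[of "j div n" j N] by (simp add: sum.delta)
    finally show ?thesis .
  qed
  have "RN n \<theta> N (monom c j) = (\<Sum>i<n. if i = j mod n then monom (\<theta> ^ (j div n) * c) i else 0)"
    unfolding RN_def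
  proof (rule sum.cong[OF refl])
    fix i assume "i \<in> {..<n}"
    hence "monom (\<Sum>k\<le>N. \<theta> ^ k * coeff (monom c j) (i + k * n)) i =
       monom (if i = j mod n then \<theta> ^ (j div n) * c else 0) i"
      by (simp only: inner lessThan_iff)
    thus "monom (\<Sum>k\<le>N. \<theta> ^ k * coeff (monom c j) (i + k * n)) i =
       (if i = j mod n then monom (\<theta> ^ (j div n) * c) i else 0)" by simp
  qed
  also have "\<dots> = monom (\<theta> ^ (j div n) * c) (j mod n)"
    using assms(1) by (simp add: sum.delta)
  finally show ?thesis .
qed

lemma monom_diff_dvd:
  fixes c \<theta> :: "'a::comm_ring_1"
  shows "(monom 1 n - [:\<theta>:]) dvd (monom c (r + q * n) - monom (\<theta> ^ q * c) r)"
proof -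
  have "(monom 1 n - [:\<theta>:]) dvd ((monom 1 n) ^ q - [:\<theta>:] ^ q)"
    by (simp add: power_diff_sumr2)
  also have "(monom 1 n) ^ q - [:\<theta>:] ^ q = monom 1 (q * n) - [:\<theta> ^ q:]"
  proof -
    have "[:\<theta>:] ^ q = [:\<theta> ^ q:]" by (induction q) auto
    thus ?thesis by (simp add: monom_power mult.commute)
  qed
  finally have "(monom 1 n - [:\<theta>:]) dvd monom c r * (monom 1 (q * n) - [:\<theta> ^ q:])"
    by (rule dvd_mult)
  also have "monom c r * (monom 1 (q * n) - [:\<theta> ^ q:]) = monom c (r + q * n) - monom (\<theta> ^ q * c) r"
    by (simp add: right_diff_distrib mult_monom smult_monom mult.commute)
  finally show ?thesis .
qed

lemma reduce_dvd:
  assumes "n > 0"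
  shows "(monom 1 n - [:\<theta>:]) dvd (f - reduce n \<theta> f)"
proof -
  let ?N = "degree f"
  have "reduce n \<theta> f = RN n \<theta> ?N f" using reduce_RN[OF assms order_refl] .
  also have "\<dots> = RN n \<theta> ?N (\<Sum>j\<le>?N. monom (coeff f j) j)" by (simp add: poly_as_sum_of_monoms)
  also have "\<dots> = (\<Sum>j\<le>?N. monom (\<theta> ^ (j div n) * coeff f j) (j mod n))"
    by (simp add: RN_sum RN_monom[OF assms])
  finally have "f - reduce n \<theta> f =
     (\<Sum>j\<le>?N. monom (coeff f j) j) - (\<Sum>j\<le>?N. monom (\<theta> ^ (j div n) * coeff f j) (j mod n))"
    by (simp add: poly_as_sum_of_monoms)
  also have "\<dots> = (\<Sum>j\<le>?N. monom (coeff f j) j - monom (\<theta> ^ (j div n) * coeff f j) (j mod n))"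
    by (simp add: sum_subtractf)
  also have "(monom 1 n - [:\<theta>:]) dvd \<dots>"
  proof (rule dvd_sum)
    fix j
    have "j = j mod n + j div n * n" by simp
    hence "monom (coeff f j) j = monom (coeff f j) (j mod n + j div n * n)" by simp
    thus "(monom 1 n - [:\<theta>:]) dvd (monom (coeff f j) j - monom (\<theta> ^ (j div n) * coeff f j) (j mod n))"
      using monom_diff_dvd[of n \<theta> "coeff f j" "j mod n" "j div n"] by simp
  qed
  finally show ?thesis .
qed

lemma reduce_hom_dvd:
  fixes h :: "'a::comm_ring_1 vr \<Rightarrow> 'a"
  assumes "n > 0" "\<And>x y. h (x + y) = h x + h y" "h 0 = 0" "\<And>x y. h (x * y) = h x * h y"
    "h 1 = 1"
    and "g dvd monom 1 n - [:h \<theta>:]" and "g dvd map_poly h f"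
  shows "g dvd map_poly h (reduce n \<theta> f)"
proof -
  obtain Q where Q: "f - reduce n \<theta> f = (monom 1 n - [:\<theta>:]) * Q"
    using reduce_dvd[OF assms(1), of \<theta> f] unfolding dvd_def by blast
  have "reduce n \<theta> f = f - (monom 1 n - [:\<theta>:]) * Q" using Q by (simp add: algebra_simps)
  hence "map_poly h (reduce n \<theta> f) = map_poly h f - map_poly h (monom 1 n - [:\<theta>:]) * map_poly h Q"
    by (simp add: map_poly_minus_hom[OF assms(2,3)] map_poly_mult_hom[OF assms(2,3,4)])
  also have "map_poly h (monom 1 n - [:\<theta>:]) = monom 1 n - [:h \<theta>:]"
    by (simp add: map_poly_minus_hom[OF assms(2,3)] map_poly_monom assms(3,5) map_poly_pCons)
  finally show ?thesis using assms(6,7) by (simp add: dvd_diff)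
qed


lemma gray_identity:
  fixes lam mu :: "'a::field"
  shows "smult (lam*(lam+mu)) q + X*(smult (-mu) r - smult (lam+mu) q) =
    smult (-(lam+mu)) (r+q) * (X - [:lam:]) + smult lam r * (X - [:lam+mu:])"
  by (simp add: algebra_simps smult_add_left smult_diff_left smult_add_right smult_diff_right)

lemma reduce_Rn: "reduce n \<theta> f \<in> Rn n"
proof -
  have "\<forall>k\<ge>n. coeff (reduce n \<theta> f) k = 0"
    unfolding reduce_def by (auto simp: coeff_sum coeff_monom)
  thus ?thesis unfolding Rn_def
    by (cases "reduce n \<theta> f = 0") (auto intro: degree_lessI)
qed

lemma Rn_add: "f \<in> Rn n \<Longrightarrow> g \<in> Rn n \<Longrightarrow> f + g \<in> Rn n"
  unfolding Rn_def using degree_add_le_max[of f g] by auto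

definition h2 :: "'a::comm_ring_1 vr \<Rightarrow> 'a" where "h2 z = re z + vp z"

lemma re_hom: "re (x + y) = re x + re y" "re (0::'a::comm_ring_1 vr) = 0"
  "re (x * y) = re x * re y" "re (1::'a::comm_ring_1 vr) = 1"
  by (simp_all add: plus_vr_def zero_vr_def times_vr_def one_vr_def)

lemma h2_hom: "h2 (x + y) = h2 x + h2 y" "h2 (0::'a::comm_ring_1 vr) = 0"
  "h2 (x * y) = h2 x * h2 y" "h2 (1::'a::comm_ring_1 vr) = 1"
  by (simp_all add: h2_def plus_vr_def zero_vr_def times_vr_def one_vr_def algebra_simps)

theorem theorem3p10:
  fixes lam mu :: "'a::{finite,field}" and n :: nat and C :: "'a vr poly set"
    and g1 g2 :: "'a poly"
  assumes "prime (CARD('a))" and "odd (CARD('a))"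
    and "n > 0"
    and "\<exists>u. VR lam mu * u = 1"
    and "constacyclic_code n (VR lam mu) C"
    and "C = Rn_ideal_gen n (VR lam mu)
               {reduce n (VR lam mu) (smult vR (emb g1)),
                reduce n (VR lam mu) (smult (1 - vR) (emb g2))}"
    and "lead_coeff g1 = 1" and "g1 dvd monom 1 n - [:lam + mu:]"
    and "lead_coeff g2 = 1" and "g2 dvd monom 1 n - [:lam:]"
  shows "gray n lam mu ` C \<subseteq> {h. \<exists>a. (monom 1 (2 * n) - 1) dvd (h - a * (g1 * g2))}"
proof -
  let ?\<theta> = "VR lam mu"
  define S where "S = {f \<in> Rn n. g2 dvd map_poly re f \<and> g1 dvd map_poly h2 f}"
  have hre: "re ?\<theta> = lam" and hh2: "h2 ?\<theta> = lam + mu" by (simp_all add: h2_def)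
  have red1: "g2 dvd map_poly re (reduce n ?\<theta> f)" if "g2 dvd map_poly re f" for f
    by (rule reduce_hom_dvd[OF assms(3) re_hom(1,2,3,4)]) (use that assms(10) hre in auto)
  have red2: "g1 dvd map_poly h2 (reduce n ?\<theta> f)" if "g1 dvd map_poly h2 f" for f
    by (rule reduce_hom_dvd[OF assms(3) h2_hom(1,2,3,4)]) (use that assms(8) hh2 in auto)
  have mre: "map_poly re (p * q) = map_poly re p * map_poly re q" for p q :: "'a vr poly"
    by (rule map_poly_mult_hom[OF re_hom(1,2,3)])
  have mh2: "map_poly h2 (p * q) = map_poly h2 p * map_poly h2 q" for p q :: "'a vr poly"
    by (rule map_poly_mult_hom[OF h2_hom(1,2,3)])
  have ideal: "Rn_ideal n ?\<theta> S"
    unfolding Rn_ideal_def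
  proof (intro conjI ballI)
    show "S \<subseteq> Rn n" unfolding S_def by auto
    show "0 \<in> S" unfolding S_def Rn_def by simp
  next
    fix f g :: "'a vr poly" assume "f \<in> S" "g \<in> S"
    thus "f + g \<in> S" unfolding S_def
      by (auto simp: Rn_add map_poly_add_hom[OF re_hom(1,2)] map_poly_add_hom[OF h2_hom(1,2)])
  next
    fix a f :: "'a vr poly" assume "a \<in> Rn n" "f \<in> S"
    thus "reduce n ?\<theta> (a * f) \<in> S" unfolding S_def
      by (auto simp: reduce_Rn mre mh2 intro!: red1 red2)
  qed
  have e1: "map_poly re (smult vR (emb g1)) = 0"
    by (rule poly_eqI) (simp add: coeff_map_poly emb_def vR_def times_vr_def zero_vr_def)
  have e2: "map_poly h2 (smult vR (emb g1)) = g1"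
    by (rule poly_eqI) (simp add: coeff_map_poly emb_def vR_def times_vr_def zero_vr_def h2_def)
  have e3: "map_poly re (smult (1 - vR) (emb g2)) = g2"
    by (rule poly_eqI) (simp add: coeff_map_poly emb_def vR_def times_vr_def zero_vr_def one_vr_def minus_vr_def)
  have e4: "map_poly h2 (smult (1 - vR) (emb g2)) = 0"
    by (rule poly_eqI) (simp add: coeff_map_poly emb_def vR_def times_vr_def zero_vr_def h2_def one_vr_def minus_vr_def)
  have gens: "{reduce n ?\<theta> (smult vR (emb g1)), reduce n ?\<theta> (smult (1 - vR) (emb g2))} \<subseteq> S"
    unfolding S_def by (auto simp: reduce_Rn intro!: red1 red2 simp: e1 e2 e3 e4)
  have CS: "C \<subseteq> S" unfolding assms(6) Rn_ideal_gen_def using ideal gens by blast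
  show ?thesis
  proof
    fix h assume "h \<in> gray n lam mu ` C"
    then obtain f where f: "f \<in> C" "h = gray n lam mu f" by auto
    let ?r = "map_poly re f" and ?q = "map_poly vp f"
    have s: "map_poly h2 f = ?r + ?q"
      by (rule poly_eqI) (simp add: coeff_map_poly h2_def zero_vr_def)
    from f CS have "g2 dvd ?r" "g1 dvd ?r + ?q" unfolding S_def using s by auto
    then obtain a1 a2 where a1: "?r + ?q = g1 * a1" and a2: "?r = g2 * a2" by (auto elim!: dvdE)
    from assms(8,10) obtain b1 b2 where b1: "monom 1 n - [:lam + mu:] = g1 * b1"
      and b2: "monom 1 n - [:lam:] = g2 * b2" by (auto elim!: dvdE)
    have "h = smult (-(lam+mu)) (?r+?q) * (monom 1 n - [:lam:]) + smult lam ?r * (monom 1 n - [:lam+mu:])"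
      unfolding f(2) gray_def Let_def by (rule gray_identity)
    also have "\<dots> = (smult (-(lam+mu)) (a1 * b2) + smult lam (a2 * b1)) * (g1 * g2)"
      unfolding a1 b1 b2 unfolding a2 by (simp add: algebra_simps)
    finally have "h - (smult (-(lam+mu)) (a1 * b2) + smult lam (a2 * b1)) * (g1 * g2) = 0" by simp
    thus "h \<in> {h. \<exists>a. (monom 1 (2 * n) - 1) dvd (h - a * (g1 * g2))}" by (metis dvd_0_right mem_Collect_eq)
  qed
qed

end
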